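(* Let $T_M$ be a persistent phylogeny solving a maximal reducible graph $G_M$. Then $T_M$ can be transformed into a persistent phylogeny $T'_M$ that solves $G_M$ and is in normal form.
   Context: Persistent phylogeny. Let $M$ be a binary matrix with rows indexed by species $S$ and columns by characters $C=\{c_1,\dots,c_m\}$, and $A\subseteq C$ (active characters). A persistent phylogeny for $(M,A)$ is a rooted tree $T$ whose nodes $x$ carry vectors $l_x\in\{0,1\}^m$ (the state of $x$) such that: the root $r$ has $l_r[j]=1$ iff $c_j\in A$; each edge is labelled $c_j^+$ for each character changing from 0 to 1 on it and $c_j^-$ for each changing from 1 to 0; each character changes state on at most two edges, and if on two, they lie on one root-to-leaf path with the gain $c_j^+$ closer to the root than the loss $c_j^-$; each row of $M$ equals $l_x$ for some node $x$. A path whose internal nodes have in- and out-degree one may be contracted into a single edge labelled by the sequence of characters on it. Red-black graphs. A red-black graph on species $S$ and characters $C$ is a bipartite graph on $S\cup C$ with red or black edges, each character incident only to black edges (inactive) or only to red edges (active). Its associated matrix has $M[s,c]=1$ iff $(s,c)$ is black, or $c$ is active and $(s,c)$ is not an edge; a tree solving the graph is a persistent phylogeny for (associated matrix, set of active characters). $S(c)=\{s:M[s,c]=1\}$. Realizing $c^+$ ($c$ inactive): with $D(c)$ the species of the component of $c$, add red edges from $c$ to $D(c)\setminus N(c)$, delete black edges on $c$ and isolated vertices; realizing $c^-$ ($c$ active, $D(c)\subseteq N(c)$): delete all edges on $c$ and isolated vertices. An active character red-adjacent to all species is free. A c-reduction $\langle c_1^+,\dots,c_k^+\rangle$ is successful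 if realizing the characters in order is always defined (realizing negatively each character right after it becomes free) and yields the empty graph. A red-black graph is reducible if it is connected and admits a successful reduction (i.e. is solved by some persistent phylogeny). Standing assumption: no free, null (isolated) or universal (inactive and black-adjacent to all species) characters, no species with no characters, no two identical character columns. An inactive character $c$ is maximal if no inactive $c'$ has $S(c)\subsetneq S(c')$. A maximal reducible graph is a reducible red-black graph all of whose characters are inactive and maximal. Normal form. A tree is in normal form if it does not have two consecutive edges $e_1,e_2$ labelled by $c^+$ and $c^-$ respectively, for some character $c$. *)

theory Defs
  imports Main
begin

record ('s, 'c) rbgraph =
  species :: "'s set"
  chars   :: "'c set"
  black   :: "('s \<times> 'c) set"
  red     :: "('s \<times> 'c) set"

definition edges :: "('s, 'c) rbgraph \<Rightarrow> ('s \<times> 'c) set" where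
  "edges G = black G \<union> red G"

definition wf_rbgraph :: "('s, 'c) rbgraph \<Rightarrow> bool" where
  "wf_rbgraph G \<longleftrightarrow> finite (species G) \<and> finite (chars G) \<and>
     edges G \<subseteq> species G \<times> chars G \<and>
     (\<forall>c \<in> chars G. \<not> ((\<exists>s. (s, c) \<in> black G) \<and> (\<exists>s. (s, c) \<in> red G)))"

definition active :: "('s, 'c) rbgraph \<Rightarrow> 'c \<Rightarrow> bool" where
  "active G c \<longleftrightarrow> c \<in> chars G \<and> (\<exists>s. (s, c) \<in> red G)"

definition inactive :: "('s, 'c) rbgraph \<Rightarrow> 'c \<Rightarrow> bool" where
  "inactive G c \<longleftrightarrow> c \<in> chars G \<and> (\<forall>s. (s, c) \<notin> red G)"

definition active_set :: "('s, 'c) rbgraph \<Rightarrow> 'c set" where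
  "active_set G = {c. active G c}"

definition assoc_matrix :: "('s, 'c) rbgraph \<Rightarrow> 's \<Rightarrow> 'c \<Rightarrow> bool" where
  "assoc_matrix G s c \<longleftrightarrow> (s, c) \<in> black G \<or> (active G c \<and> (s, c) \<notin> red G)"

definition Sc :: "('s, 'c) rbgraph \<Rightarrow> 'c \<Rightarrow> 's set" where
  "Sc G c = {s \<in> species G. assoc_matrix G s c}"

definition Nc :: "('s, 'c) rbgraph \<Rightarrow> 'c \<Rightarrow> 's set" where
  "Nc G c = {s. (s, c) \<in> edges G}"

definition adj :: "('s, 'c) rbgraph \<Rightarrow> ('s + 'c) rel" where
  "adj G = {(Inl s, Inr c) | s c. (s, c) \<in> edges G} \<union> {(Inr c, Inl s) | s c. (s, c) \<in> edges G}"

definition vertices :: "('s, 'c) rbgraph \<Rightarrow> ('s + 'c) set" where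
  "vertices G = Inl ` species G \<union> Inr ` chars G"

definition rb_connected :: "('s, 'c) rbgraph \<Rightarrow> bool" where
  "rb_connected G \<longleftrightarrow> (\<forall>u \<in> vertices G. \<forall>v \<in> vertices G. (u, v) \<in> (adj G)\<^sup>*)"

definition Dc :: "('s, 'c) rbgraph \<Rightarrow> 'c \<Rightarrow> 's set" where
  "Dc G c = {s \<in> species G. (Inr c, Inl s) \<in> (adj G)\<^sup>*}"

definition del_isolated :: "('s, 'c) rbgraph \<Rightarrow> ('s, 'c) rbgraph" where
  "del_isolated G = G\<lparr> species := {s \<in> species G. \<exists>c. (s, c) \<in> edges G},
                       chars := {c \<in> chars G. \<exists>s. (s, c) \<in> edges G} \<rparr>"

text \<open>Realizing c+ (defined when c is inactive).\<close>
definition realize_plus :: "('s, 'c) rbgraph \<Rightarrow> 'c \<Rightarrow> ('s, 'c) rbgraph" where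
  "realize_plus G c = del_isolated (G\<lparr>
      black := {e \<in> black G. snd e \<noteq> c},
      red := red G \<union> {(s, c) | s. s \<in> Dc G c - Nc G c} \<rparr>)"

text \<open>Realizing c- (defined when c is active and D(c) is contained in N(c)).\<close>
definition realize_minus :: "('s, 'c) rbgraph \<Rightarrow> 'c \<Rightarrow> ('s, 'c) rbgraph" where
  "realize_minus G c = del_isolated (G\<lparr>
      black := {e \<in> black G. snd e \<noteq> c},
      red := {e \<in> red G. snd e \<noteq> c} \<rparr>)"

definition free_char :: "('s, 'c) rbgraph \<Rightarrow> 'c \<Rightarrow> bool" where
  "free_char G c \<longleftrightarrow> active G c \<and> (\<forall>s \<in> species G. (s, c) \<in> red G)"

definition null_char :: "('s, 'c) rbgraph \<Rightarrow> 'c \<Rightarrow> bool" where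
  "null_char G c \<longleftrightarrow> c \<in> chars G \<and> (\<forall>s. (s, c) \<notin> edges G)"

definition universal_char :: "('s, 'c) rbgraph \<Rightarrow> 'c \<Rightarrow> bool" where
  "universal_char G c \<longleftrightarrow> inactive G c \<and> (\<forall>s \<in> species G. (s, c) \<in> black G)"

definition is_empty_graph :: "('s, 'c) rbgraph \<Rightarrow> bool" where
  "is_empty_graph G \<longleftrightarrow> species G = {} \<and> chars G = {} \<and> black G = {} \<and> red G = {}"

inductive free_closure :: "('s, 'c) rbgraph \<Rightarrow> ('s, 'c) rbgraph \<Rightarrow> bool" where
  fc_stop: "(\<forall>c. \<not> free_char G c) \<Longrightarrow> free_closure G G"
| fc_step: "free_char G c \<Longrightarrow> Dc G c \<subseteq> Nc G c \<Longrightarrow>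
            free_closure (realize_minus G c) G' \<Longrightarrow> free_closure G G'"

inductive reduction_run :: "('s, 'c) rbgraph \<Rightarrow> 'c list \<Rightarrow> ('s, 'c) rbgraph \<Rightarrow> bool" where
  rr_nil: "reduction_run G [] G"
| rr_cons: "inactive G c \<Longrightarrow> free_closure (realize_plus G c) G1 \<Longrightarrow>
            reduction_run G1 cs G2 \<Longrightarrow> reduction_run G (c # cs) G2"

definition successful_reduction :: "('s, 'c) rbgraph \<Rightarrow> 'c list \<Rightarrow> bool" where
  "successful_reduction G cs \<longleftrightarrow> (\<exists>G'. reduction_run G cs G' \<and> is_empty_graph G')"

definition reducible :: "('s, 'c) rbgraph \<Rightarrow> bool" where
  "reducible G \<longleftrightarrow> rb_connected G \<and> (\<exists>cs. successful_reduction G cs)"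

definition standing_assumptions :: "('s, 'c) rbgraph \<Rightarrow> bool" where
  "standing_assumptions G \<longleftrightarrow>
     (\<forall>c. \<not> free_char G c) \<and> (\<forall>c. \<not> null_char G c) \<and> (\<forall>c. \<not> universal_char G c) \<and>
     (\<forall>s \<in> species G. \<exists>c. (s, c) \<in> edges G) \<and>
     (\<forall>c \<in> chars G. \<forall>c' \<in> chars G. c \<noteq> c' \<longrightarrow>
        (\<exists>s \<in> species G. assoc_matrix G s c \<noteq> assoc_matrix G s c'))"

definition maximal_char :: "('s, 'c) rbgraph \<Rightarrow> 'c \<Rightarrow> bool" where
  "maximal_char G c \<longleftrightarrow> inactive G c \<and> \<not> (\<exists>c'. inactive G c' \<and> Sc G c \<subset> Sc G c')"

definition maximal_reducible :: "('s, 'c) rbgraph \<Rightarrow> bool" where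
  "maximal_reducible G \<longleftrightarrow> reducible G \<and> (\<forall>c \<in> chars G. inactive G c \<and> maximal_char G c)"

text \<open>Rooted ordered trees whose nodes carry states: the state of a node is the set of
  characters having value 1 there.\<close>
datatype 'c ptree = Node "'c set" "'c ptree list"

fun subtree_at :: "'c ptree \<Rightarrow> nat list \<Rightarrow> 'c ptree option" where
  "subtree_at t [] = Some t"
| "subtree_at (Node l ts) (i # p) = (if i < length ts then subtree_at (ts ! i) p else None)"

definition positions :: "'c ptree \<Rightarrow> nat list set" where
  "positions t = {p. subtree_at t p \<noteq> None}"

fun state_of :: "'c ptree \<Rightarrow> 'c set" where
  "state_of (Node l ts) = l"

definition st :: "'c ptree \<Rightarrow> nat list \<Rightarrow> 'c set" where
  "st t p = state_of (the (subtree_at t p))"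

text \<open>Edges are identified with the positions p \<noteq> [] of their lower endpoint;
  the upper endpoint is butlast p.\<close>
definition tree_edges :: "'c ptree \<Rightarrow> nat list set" where
  "tree_edges t = {p \<in> positions t. p \<noteq> []}"

definition gain_edges :: "'c ptree \<Rightarrow> 'c \<Rightarrow> nat list set" where
  "gain_edges t c = {p \<in> tree_edges t. c \<notin> st t (butlast p) \<and> c \<in> st t p}"

definition loss_edges :: "'c ptree \<Rightarrow> 'c \<Rightarrow> nat list set" where
  "loss_edges t c = {p \<in> tree_edges t. c \<in> st t (butlast p) \<and> c \<notin> st t p}"

definition edge_labels :: "'c ptree \<Rightarrow> nat list \<Rightarrow> 'c set" where
  "edge_labels t p = (st t (butlast p) - st t p) \<union> (st t p - st t (butlast p))"

definition persistent_phylogeny ::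
  "'s set \<Rightarrow> 'c set \<Rightarrow> ('s \<Rightarrow> 'c \<Rightarrow> bool) \<Rightarrow> 'c set \<Rightarrow> 'c ptree \<Rightarrow> bool" where
  "persistent_phylogeny S C M A t \<longleftrightarrow>
     (\<forall>p \<in> positions t. st t p \<subseteq> C) \<and>
     st t [] = A \<and>
     (\<forall>p \<in> tree_edges t. card (edge_labels t p) = 1) \<and>
     (\<forall>c \<in> C. card (gain_edges t c) \<le> 1 \<and> card (loss_edges t c) \<le> 1 \<and>
        (\<forall>g \<in> gain_edges t c. \<forall>l \<in> loss_edges t c. \<exists>q. q \<noteq> [] \<and> l = g @ q)) \<and>
     (\<forall>s \<in> S. \<exists>p \<in> positions t. st t p = {c \<in> C. M s c})"

definition solves :: "'c ptree \<Rightarrow> ('s, 'c) rbgraph \<Rightarrow> bool" where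
  "solves t G \<longleftrightarrow>
     persistent_phylogeny (species G) (chars G) (assoc_matrix G) (active_set G) t"

definition normal_form :: "'c ptree \<Rightarrow> bool" where
  "normal_form t \<longleftrightarrow> \<not> (\<exists>p j c. p \<in> gain_edges t c \<and> p @ [j] \<in> loss_edges t c)"

end

theory Submission
  imports Defs
begin


definition SO :: "'c ptree \<Rightarrow> nat list \<Rightarrow> 'c set option" where
  "SO t q = map_option state_of (subtree_at t q)"

lemma SO_pos: "SO t q \<noteq> None \<longleftrightarrow> q \<in> positions t"
  by (simp add: SO_def positions_def)

lemma SO_st: "q \<in> positions t \<Longrightarrow> SO t q = Some (st t q)"
  by (auto simp: SO_def positions_def st_def)

lemma subtree_at_append:
  "subtree_at t (p @ q) = (case subtree_at t p of None \<Rightarrow> None | Some u \<Rightarrow> subtree_at u q)"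
proof (induction p arbitrary: t)
  case Nil then show ?case by simp
next
  case (Cons a p) then show ?case by (cases t) auto
qed

lemma positions_prefix: "p @ q \<in> positions t \<Longrightarrow> p \<in> positions t"
  by (auto simp: positions_def subtree_at_append split: option.splits)

lemma finite_positions: "finite (positions t)"
proof (induction t)
  case (Node l ts)
  have "positions (Node l ts) \<subseteq> insert [] (\<Union>i<length ts. (Cons i) ` positions (ts!i))"
  proof
    fix p assume "p \<in> positions (Node l ts)"
    then show "p \<in> insert [] (\<Union>i<length ts. (Cons i) ` positions (ts!i))"
      by (cases p) (auto simp: positions_def split: if_splits)
  qed
  moreover have "finite (insert [] (\<Union>i<length ts. (Cons i) ` positions (ts!i)))"
    using Node.IH by auto
  ultimately show ?case by (rule finite_subset)
qed

lemma ivt: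
  assumes "p \<in> positions t" "P (st t [])" "\<not> P (st t p)"
  shows "\<exists>e\<in>tree_edges t. P (st t (butlast e)) \<and> \<not> P (st t e) \<and> (\<exists>r. p = e @ r)"
  using assms
proof (induction p rule: rev_induct)
  case Nil then show ?case by simp
next
  case (snoc a p)
  have pp: "p \<in> positions t" using snoc.prems(1) positions_prefix by blast
  show ?case
  proof (cases "P (st t p)")
    case True
    then show ?thesis using snoc.prems by (intro bexI[of _ "p @ [a]"]) (auto simp: tree_edges_def)
  next
    case False
    then obtain e r where "e \<in> tree_edges t" "P (st t (butlast e))" "\<not> P (st t e)" "p = e @ r"
      using snoc.IH pp snoc.prems by blast
    then show ?thesis by (intro bexI[of _ e]) auto
  qed
qed

fun upd :: "'c ptree \<Rightarrow> nat list \<Rightarrow> 'c ptree \<Rightarrow> 'c ptree" where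
  "upd t [] s = s"
| "upd (Node l ts) (i # p) s = (if i < length ts then Node l (ts[i := upd (ts!i) p s]) else Node l ts)"

lemma upd_prefix: "subtree_at t x \<noteq> None \<Longrightarrow> subtree_at (upd t x s) (x @ r) = subtree_at s r"
proof (induction x arbitrary: t)
  case Nil then show ?case by simp
next
  case (Cons a x) then show ?case by (cases t) (auto split: if_splits)
qed

lemma upd_other: "subtree_at t x \<noteq> None \<Longrightarrow> \<not> (\<exists>r. q = x @ r) \<Longrightarrow> SO (upd t x s) q = SO t q"
proof (induction x arbitrary: t q)
  case Nil then show ?case by simp
next
  case (Cons a x)
  obtain l ts where t: "t = Node l ts" by (cases t)
  show ?case
  proof (cases q)
    case Nil then show ?thesis using Cons t by (auto simp: SO_def split: if_splits)
  next
    case (Cons b q')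
    show ?thesis
    proof (cases "b = a")
      case True
      have "\<not> (\<exists>r. q' = x @ r)" using Cons.prems(2) \<open>q = b # q'\<close> True by auto
      then show ?thesis using Cons.prems(1) Cons.IH[of "ts!a" q'] t \<open>q = b # q'\<close> True
        by (auto simp: SO_def split: if_splits)
    next
      case False
      then show ?thesis using Cons.prems t \<open>q = b # q'\<close> by (auto simp: SO_def split: if_splits)
    qed
  qed
qed


lemma transfer:
  assumes pp: "persistent_phylogeny S C M A T"
    and inj: "inj_on \<phi> (positions T')"
    and maps: "\<And>q. q \<in> positions T' \<Longrightarrow> \<phi> q \<in> positions T \<and> st T' q = st T (\<phi> q)"
    and edg: "\<And>q. q \<in> tree_edges T' \<Longrightarrow> \<phi> q \<in> tree_edges T \<and> st T' (butlast q) = st T (butlast (\<phi> q))"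
    and root: "st T' [] = st T []"
    and cover: "\<And>p. p \<in> positions T \<Longrightarrow> \<exists>q\<in>positions T'. st T' q = st T p"
  shows "persistent_phylogeny S C M A T'"
proof -
  note P = pp[unfolded persistent_phylogeny_def]
  have tp: "tree_edges T' \<subseteq> positions T'" by (auto simp: tree_edges_def)
  have lab: "edge_labels T' q = edge_labels T (\<phi> q)" if "q \<in> tree_edges T'" for q
    using edg[OF that] maps[of q] that tp by (auto simp: edge_labels_def)
  have gmap: "\<phi> ` gain_edges T' c \<subseteq> gain_edges T c" for c
    using edg maps tp by (auto simp: gain_edges_def)
  have lmap: "\<phi> ` loss_edges T' c \<subseteq> loss_edges T c" for c
    using edg maps tp by (auto simp: loss_edges_def)
  have finT: "finite (gain_edges T c)" "finite (loss_edges T c)" for c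
    using finite_positions[of T] by (auto simp: gain_edges_def loss_edges_def tree_edges_def
        intro: finite_subset)
  have injg: "inj_on \<phi> (gain_edges T' c)" for c
    by (rule inj_on_subset[OF inj]) (auto simp: gain_edges_def tree_edges_def)
  have injl: "inj_on \<phi> (loss_edges T' c)" for c
    by (rule inj_on_subset[OF inj]) (auto simp: loss_edges_def tree_edges_def)
  have cg: "card (gain_edges T' c) \<le> card (gain_edges T c)" for c
    using card_inj_on_le[OF injg gmap finT(1)] .
  have cl: "card (loss_edges T' c) \<le> card (loss_edges T c)" for c
    using card_inj_on_le[OF injl lmap finT(2)] .
  have finT': "finite (gain_edges T' c)" "finite (loss_edges T' c)" for c
    using finite_positions[of T'] by (auto simp: gain_edges_def loss_edges_def tree_edges_def
        intro: finite_subset)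
  have anc: "\<exists>q. q \<noteq> [] \<and> l = g @ q" if c: "c \<in> C" and g: "g \<in> gain_edges T' c"
    and l: "l \<in> loss_edges T' c" for c g l
  proof (cases "c \<in> st T' []")
    case False
    have lpos: "l \<in> positions T'" "l \<noteq> []" using l by (auto simp: loss_edges_def tree_edges_def)
    have blpos: "butlast l \<in> positions T'"
      using lpos positions_prefix[of "butlast l" "[last l]"] by (simp add: snoc_eq_iff_butlast)
    have "c \<in> st T' (butlast l)" using l by (auto simp: loss_edges_def)
    from ivt[of "butlast l" T' "\<lambda>X. c \<notin> X", OF blpos] False this
    obtain e r where e: "e \<in> tree_edges T'" "c \<notin> st T' (butlast e)" "c \<in> st T' e" "butlast l = e @ r"
      by auto
    have eg: "e \<in> gain_edges T' c" using e by (auto simp: gain_edges_def)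
    have "card (gain_edges T' c) \<le> 1" using cg[of c] P c by fastforce
    then have "e = g" using eg g finT'(1)[of c]
      using card_le_Suc0_iff_eq by (metis One_nat_def)
    then show ?thesis using e(4) lpos
      by (metis append_butlast_last_id append_assoc append_is_Nil_conv not_Cons_self2)
  next
    case True
    have gT: "\<phi> g \<in> gain_edges T c" using gmap g by auto
    then have gp: "\<phi> g \<in> positions T" "\<phi> g \<noteq> []" by (auto simp: gain_edges_def tree_edges_def)
    have bgp: "butlast (\<phi> g) \<in> positions T"
      using gp positions_prefix[of "butlast (\<phi> g)" "[last (\<phi> g)]"] by (simp add: snoc_eq_iff_butlast)
    have "c \<notin> st T (butlast (\<phi> g))" using gT by (auto simp: gain_edges_def)
    moreover have "c \<in> st T []" using True root by simp
    ultimately obtain e r where e: "e \<in> tree_edges T" "c \<in> st T (butlast e)" "c \<notin> st T e"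
      "butlast (\<phi> g) = e @ r"
      using ivt[of "butlast (\<phi> g)" T "\<lambda>X. c \<in> X", OF bgp] by auto
    have el: "e \<in> loss_edges T c" using e by (auto simp: loss_edges_def)
    obtain q where "q \<noteq> []" "e = \<phi> g @ q" using P c gT el by blast
    then have "length e > length (\<phi> g)" by simp
    moreover have "length e \<le> length (butlast (\<phi> g))" using e(4) by simp
    ultimately show ?thesis using gp by simp
  qed
  have 1: "\<forall>p\<in>positions T'. st T' p \<subseteq> C" using maps P by metis
  have 2: "st T' [] = A" using root P by simp
  have 3: "\<forall>p\<in>tree_edges T'. card (edge_labels T' p) = 1" using lab edg P by metis
  have 4: "\<forall>c\<in>C. card (gain_edges T' c) \<le> 1 \<and> card (loss_edges T' c) \<le> 1 \<and>
        (\<forall>g\<in>gain_edges T' c. \<forall>l\<in>loss_edges T' c. \<exists>q. q \<noteq> [] \<and> l = g @ q)"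
  proof
    fix c assume c: "c \<in> C"
    have "card (gain_edges T' c) \<le> 1" using cg[of c] P c by fastforce
    moreover have "card (loss_edges T' c) \<le> 1" using cl[of c] P c by fastforce
    ultimately show "card (gain_edges T' c) \<le> 1 \<and> card (loss_edges T' c) \<le> 1 \<and>
        (\<forall>g\<in>gain_edges T' c. \<forall>l\<in>loss_edges T' c. \<exists>q. q \<noteq> [] \<and> l = g @ q)"
      using anc c by blast
  qed
  have 5: "\<forall>s\<in>S. \<exists>p\<in>positions T'. st T' p = {c \<in> C. M s c}"
  proof
    fix s assume "s \<in> S"
    then obtain p where "p \<in> positions T" "st T p = {c \<in> C. M s c}" using P by blast
    then show "\<exists>p\<in>positions T'. st T' p = {c \<in> C. M s c}" using cover by metis
  qed
  show ?thesis unfolding persistent_phylogeny_def using 1 2 3 4 5 by blast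
qed


fun psi :: "nat \<Rightarrow> nat \<Rightarrow> nat \<Rightarrow> nat list \<Rightarrow> nat list" where
  "psi n i j [] = []"
| "psi n i j (a # r) = (if a < n then (if a = i then (case r of [] \<Rightarrow> [i]
       | b # r' \<Rightarrow> i # (if b < j then b else Suc b) # r') else a # r) else i # j # (a - n) # r)"

definition dl :: "nat \<Rightarrow> 'a list \<Rightarrow> 'a list" where
  "dl j vs = take j vs @ drop (Suc j) vs"

lemma dl_length: "j < length vs \<Longrightarrow> length (dl j vs) = length vs - 1"
  by (simp add: dl_def)

lemma dl_nth: "j < length vs \<Longrightarrow> b < length vs - 1 \<Longrightarrow>
   dl j vs ! b = (if b < j then vs ! b else vs ! Suc b)"
  by (auto simp: dl_def nth_append min_def)

lemma psi_loc:
  assumes i: "i < length ts" and ti: "ts ! i = Node L' vs" and j: "j < length vs"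
    and vj: "vs ! j = Node L2 ws"
  shows "SO (Node L (ts[i := Node L' (dl j vs)] @ ws)) r = SO (Node L ts) (psi (length ts) i j r)"
proof (cases r)
  case Nil then show ?thesis by (simp add: SO_def)
next
  case (Cons a r')
  show ?thesis
  proof (cases "a < length ts")
    case True
    show ?thesis
    proof (cases "a = i")
      case ai: True
      show ?thesis
      proof (cases r')
        case Nil then show ?thesis using Cons True ai i ti by (simp add: SO_def nth_append)
      next
        case (Cons b r'')
        show ?thesis
        proof (cases "b < length vs - 1")
          case True
          then show ?thesis using Cons \<open>r = a # r'\<close> ai i ti j
            by (auto simp: SO_def nth_append dl_length dl_nth)
        next
          case False
          then show ?thesis using Cons \<open>r = a # r'\<close> ai i ti j
            by (auto simp: SO_def nth_append dl_length)
        qed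
      qed
    next
      case False
      then show ?thesis using Cons \<open>a < length ts\<close> i by (simp add: SO_def nth_append)
    qed
  next
    case False
    then show ?thesis using Cons i ti j vj by (auto simp: SO_def nth_append)
  qed
qed

lemma psi_Nil: "psi n i j r = [] \<longleftrightarrow> r = []"
  by (cases r) (auto split: list.splits)

lemma psi_inj: "psi n i j r1 = psi n i j r2 \<Longrightarrow> r1 = r2"
  apply (cases r1; cases r2)
     apply (auto split: if_splits list.splits)
  done

lemma psi_not_ij: "psi n i j r \<noteq> [i, j]"
  by (cases r) (auto split: if_splits list.splits)

lemma psi_butlast: "r \<noteq> [] \<Longrightarrow> psi n i j (butlast r) = butlast (psi n i j r) \<or> (\<exists>a. r = [a] \<and> a \<ge> n)"
  apply (cases r)
   apply simp
  subgoal for a r'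
    apply (cases r')
     apply (auto split: if_splits list.splits)
    done
  done


lemma step:
  assumes pp: "persistent_phylogeny S C M A T"
    and sx: "subtree_at T x = Some (Node L ts)"
    and i: "i < length ts" and ti: "ts ! i = Node L' vs" and j: "j < length vs"
    and vj: "vs ! j = Node L ws"
  shows "\<exists>T'. persistent_phylogeny S C M A T' \<and> card (positions T') < card (positions T)"
proof -
  define n where "n = length ts"
  define s' where "s' = Node L (ts[i := Node L' (dl j vs)] @ ws)"
  define T' where "T' = upd T x s'"
  define \<phi> where "\<phi> q = (if \<exists>r. q = x @ r then x @ psi n i j (drop (length x) q) else q)" for q
  have key: "SO T' q = SO T (\<phi> q)" for q
  proof (cases "\<exists>r. q = x @ r")
    case True
    then obtain r where q: "q = x @ r" by blast
    have "SO T' q = SO s' r" using upd_prefix[of T x s' r] sx q by (simp add: T'_def SO_def)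
    also have "\<dots> = SO (Node L ts) (psi n i j r)" unfolding s'_def n_def
      by (rule psi_loc[OF i ti j vj])
    also have "\<dots> = SO T (x @ psi n i j r)" using sx by (simp add: SO_def subtree_at_append)
    finally show ?thesis using q by (simp add: \<phi>_def)
  next
    case False
    then show ?thesis using upd_other[of T x q s'] sx by (simp add: T'_def \<phi>_def)
  qed
  have posiff: "q \<in> positions T' \<longleftrightarrow> \<phi> q \<in> positions T" for q
    using key[of q] SO_pos by metis
  have steq: "q \<in> positions T' \<Longrightarrow> st T' q = st T (\<phi> q)" for q
    using key[of q] SO_st posiff by (metis option.inject)
  have inj: "inj \<phi>"
  proof (rule injI)
    fix q1 q2 assume e: "\<phi> q1 = \<phi> q2"
    show "q1 = q2"
    proof (cases "\<exists>r. q1 = x @ r"; cases "\<exists>r. q2 = x @ r")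
      assume "\<exists>r. q1 = x @ r" "\<exists>r. q2 = x @ r"
      then obtain r1 r2 where "q1 = x @ r1" "q2 = x @ r2" by blast
      then show ?thesis using e psi_inj by (auto simp: \<phi>_def)
    next
      assume "\<exists>r. q1 = x @ r" "\<not> (\<exists>r. q2 = x @ r)"
      then show ?thesis using e by (auto simp: \<phi>_def)
    next
      assume "\<not> (\<exists>r. q1 = x @ r)" "\<exists>r. q2 = x @ r"
      then show ?thesis using e by (auto simp: \<phi>_def)
    next
      assume "\<not> (\<exists>r. q1 = x @ r)" "\<not> (\<exists>r. q2 = x @ r)"
      then show ?thesis using e by (auto simp: \<phi>_def)
    qed
  qed
  have phi_Nil: "\<phi> q = [] \<longleftrightarrow> q = []" for q
    by (auto simp: \<phi>_def psi_Nil)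
  have xpos: "x \<in> positions T" using sx by (simp add: positions_def)
  have stx: "st T x = L" using sx by (simp add: st_def)
  have xij: "subtree_at T (x @ [i, j]) = Some (Node L ws)"
    using sx i ti j vj by (simp add: subtree_at_append)
  have stxij: "st T (x @ [i, j]) = L" using xij by (simp add: st_def)
  have xijpos: "x @ [i, j] \<in> positions T" using xij by (simp add: positions_def)
  have bl: "st T' (butlast q) = st T (butlast (\<phi> q))" if q: "q \<in> tree_edges T'" for q
  proof -
    have qp: "q \<in> positions T'" "q \<noteq> []" using q by (auto simp: tree_edges_def)
    have bqp: "butlast q \<in> positions T'"
      using qp positions_prefix[of "butlast q" "[last q]"] by (simp add: snoc_eq_iff_butlast)
    have "st T' (butlast q) = st T (\<phi> (butlast q))" using steq bqp by blast
    also have "\<dots> = st T (butlast (\<phi> q))"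
    proof (cases "\<exists>r. q = x @ r")
      case True
      then obtain r where qr: "q = x @ r" by blast
      show ?thesis
      proof (cases "r = []")
        case True
        then have "\<not> (\<exists>r'. butlast q = x @ r')" using qr qp(2)
          by (metis append_Nil2 append_assoc append_butlast_last_id length_append length_butlast
              nat_less_le not_add_less1 diff_less length_greater_0_conv zero_less_one le_add1)
        then show ?thesis using qr True by (simp add: \<phi>_def)
      next
        case False
        have bq: "butlast q = x @ butlast r" using qr False by (simp add: butlast_append)
        have pn: "psi n i j r \<noteq> []" using False psi_Nil by blast
        have pbq: "\<phi> (butlast q) = x @ psi n i j (butlast r)" using bq by (simp add: \<phi>_def)
        have pq: "butlast (\<phi> q) = x @ butlast (psi n i j r)" using qr pn
          by (simp add: \<phi>_def butlast_append)
        from psi_butlast[OF False, of n i j]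
        show ?thesis
        proof
          assume "psi n i j (butlast r) = butlast (psi n i j r)"
          then show ?thesis using pbq pq by simp
        next
          assume "\<exists>a. r = [a] \<and> a \<ge> n"
          then obtain a where "r = [a]" "a \<ge> n" by blast
          then show ?thesis using pbq pq stx stxij by simp
        qed
      qed
    next
      case False
      then have "\<not> (\<exists>r'. butlast q = x @ r')" using qp(2)
        by (metis append_assoc append_butlast_last_id)
      then show ?thesis using False by (simp add: \<phi>_def)
    qed
    finally show ?thesis .
  qed
  have root: "st T' [] = st T []"
  proof -
    have "\<phi> [] = []" using phi_Nil by simp
    moreover have "[] \<in> positions T'" by (simp add: positions_def)
    ultimately show ?thesis using steq by metis
  qed
  have phi_x: "\<phi> x = x" by (simp add: \<phi>_def)
  have cover: "\<exists>q\<in>positions T'. st T' q = st T p" if p: "p \<in> positions T" for p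
  proof -
    have ex: "\<exists>q. \<phi> q = p" if "p \<noteq> x @ [i, j]"
    proof (cases "\<exists>r. p = x @ r")
      case False
      then show ?thesis by (intro exI[of _ p]) (simp add: \<phi>_def)
    next
      case True
      then obtain r where pr: "p = x @ r" by blast
      have rpos: "subtree_at (Node L ts) r \<noteq> None"
        using p pr sx by (simp add: positions_def subtree_at_append)
      show ?thesis
      proof (cases r)
        case Nil then show ?thesis using pr phi_x by (intro exI[of _ x]) simp
      next
        case (Cons a r')
        have an: "a < n" using rpos Cons by (auto simp: n_def split: if_splits)
        show ?thesis
        proof (cases "a = i")
          case False
          then show ?thesis using Cons pr an by (intro exI[of _ p]) (simp add: \<phi>_def)
        next
          case True
          show ?thesis
          proof (cases r')
            case Nil
            then show ?thesis using Cons pr an True by (intro exI[of _ p]) (simp add: \<phi>_def)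
          next
            case (Cons b r'')
            consider "b < j" | "b = j" | "b > j" by linarith
            then show ?thesis
            proof cases
              case 1
              then show ?thesis using Cons \<open>r = a # r'\<close> pr an True
                by (intro exI[of _ p]) (simp add: \<phi>_def)
            next
              case 2
              show ?thesis
              proof (cases r'')
                case Nil
                then show ?thesis using that 2 Cons \<open>r = a # r'\<close> pr True by simp
              next
                case (Cons k r3)
                show ?thesis using Cons 2 \<open>r' = b # r''\<close> \<open>r = a # r'\<close> pr True
                  by (intro exI[of _ "x @ (n + k) # r3"]) (simp add: \<phi>_def)
              qed
            next
              case 3
              then show ?thesis using Cons \<open>r = a # r'\<close> pr an True
                by (intro exI[of _ "x @ i # (b - 1) # r''"]) (simp add: \<phi>_def n_def i)
            qed
          qed
        qed
      qed
    qed
    show ?thesis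
    proof (cases "p = x @ [i, j]")
      case True
      have "x \<in> positions T'" using posiff phi_x xpos by simp
      then show ?thesis using True steq phi_x stx stxij by metis
    next
      case False
      then obtain q where "\<phi> q = p" using ex by blast
      then show ?thesis using posiff steq p by metis
    qed
  qed
  have pers: "persistent_phylogeny S C M A T'"
  proof (rule transfer[OF pp, of \<phi>])
    show "inj_on \<phi> (positions T')" using inj by (simp add: inj_on_def inj_def)
    show "\<And>q. q \<in> positions T' \<Longrightarrow> \<phi> q \<in> positions T \<and> st T' q = st T (\<phi> q)"
      using posiff steq by blast
    show "\<And>q. q \<in> tree_edges T' \<Longrightarrow> \<phi> q \<in> tree_edges T \<and> st T' (butlast q) = st T (butlast (\<phi> q))"
      using posiff bl phi_Nil by (auto simp: tree_edges_def)
    show "st T' [] = st T []" by (rule root)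
    show "\<And>p. p \<in> positions T \<Longrightarrow> \<exists>q\<in>positions T'. st T' q = st T p" using cover by blast
  qed
  have sub: "\<phi> ` positions T' \<subseteq> positions T - {x @ [i, j]}"
    using posiff psi_not_ij by (auto simp: \<phi>_def)
  have "card (positions T') = card (\<phi> ` positions T')"
    using inj by (simp add: card_image inj_on_def inj_def)
  also have "\<dots> \<le> card (positions T - {x @ [i, j]})"
    by (rule card_mono[OF _ sub]) (simp add: finite_positions)
  also have "\<dots> < card (positions T)"
    using xijpos finite_positions by (meson card_Diff1_less)
  finally show ?thesis using pers by blast
qed


lemma labels_eq:
  assumes "card (edge_labels T p) = 1" "c \<in> edge_labels T p"
  shows "edge_labels T p = {c}"
  using assms by (metis card_1_singletonE singletonD)

lemma normalize:
  "persistent_phylogeny S C M A T \<Longrightarrow> \<exists>T'. persistent_phylogeny S C M A T' \<and> normal_form T'"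
proof (induction "card (positions T)" arbitrary: T rule: less_induct)
  case less
  show ?case
  proof (cases "normal_form T")
    case True then show ?thesis using less.prems by blast
  next
    case False
    then obtain p j c where g: "p \<in> gain_edges T c" and l: "p @ [j] \<in> loss_edges T c"
      unfolding normal_form_def by blast
    note P = less.prems[unfolded persistent_phylogeny_def]
    define x where "x = butlast p"
    define i where "i = last p"
    have pne: "p \<noteq> []" using g by (auto simp: gain_edges_def tree_edges_def)
    have px: "p = x @ [i]" using pne by (simp add: x_def i_def)
    have ge: "p \<in> tree_edges T" "p @ [j] \<in> tree_edges T"
      using g l by (auto simp: gain_edges_def loss_edges_def)
    have c1: "card (edge_labels T p) = 1" "card (edge_labels T (p @ [j])) = 1" using P ge by auto
    have m1: "c \<in> edge_labels T p" using g by (auto simp: gain_edges_def edge_labels_def)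
    have m2: "c \<in> edge_labels T (p @ [j])" using l by (auto simp: loss_edges_def edge_labels_def)
    have l1: "edge_labels T p = {c}" using labels_eq[OF c1(1) m1] .
    have l2: "edge_labels T (p @ [j]) = {c}" using labels_eq[OF c1(2) m2] .
    have s1: "st T p = insert c (st T x)"
    proof -
      have "st T x - st T p \<subseteq> {c}" "st T p - st T x \<subseteq> {c}" "c \<in> st T p"
        using l1 g unfolding edge_labels_def gain_edges_def x_def by auto
      then show ?thesis by auto
    qed
    have s2: "st T (p @ [j]) = st T p - {c}"
    proof -
      have "st T p - st T (p @ [j]) \<subseteq> {c}" "st T (p @ [j]) - st T p \<subseteq> {c}" "c \<notin> st T (p @ [j])"
        using l2 l unfolding edge_labels_def loss_edges_def by auto
      then show ?thesis by auto
    qed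
    have cx: "c \<notin> st T x" using g by (simp add: gain_edges_def x_def)
    have steq: "st T (x @ [i, j]) = st T x" using s1 s2 cx px by auto
    have pos: "x @ [i, j] \<in> positions T" using ge px by (simp add: tree_edges_def)
    then obtain s0 where sx: "subtree_at T x = Some s0"
      using positions_prefix[of x "[i, j]" T] by (auto simp: positions_def)
    obtain L ts where s0: "s0 = Node L ts" by (cases s0)
    have L: "L = st T x" using sx s0 by (simp add: st_def)
    have "subtree_at s0 [i, j] \<noteq> None" using pos sx by (simp add: positions_def subtree_at_append)
    then have i: "i < length ts" using s0 by (auto split: if_splits)
    obtain L' vs where ti: "ts ! i = Node L' vs" by (cases "ts ! i")
    have j: "j < length vs" using \<open>subtree_at s0 [i, j] \<noteq> None\<close> s0 i ti by (auto split: if_splits)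
    obtain L2 ws where vj: "vs ! j = Node L2 ws" by (cases "vs ! j")
    have "st T (x @ [i, j]) = L2" using sx s0 i ti j vj by (simp add: st_def subtree_at_append)
    then have "L2 = L" using steq L by simp
    then obtain T1 where T1: "persistent_phylogeny S C M A T1" "card (positions T1) < card (positions T)"
      using step[OF less.prems sx[unfolded s0] i ti j] vj by blast
    then show ?thesis using less.hyps by blast
  qed
qed


theorem lemma6:
  fixes GM :: "('s, 'c) rbgraph" and TM :: "'c ptree"
  assumes "wf_rbgraph GM"
    and "standing_assumptions GM"
    and "maximal_reducible GM"
    and "solves TM GM"
  shows "\<exists>T'. solves T' GM \<and> normal_form T'"
  using normalize assms(4) unfolding solves_def by blast

end
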